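(* Let $(\Delta,R)$ be a gentle quiver. Then \[ \sum_{\mathcal O\in\mathcal N/\mathbb Z\,\cup\,\mathcal C/\mathbb Z} p(\mathcal O) = 2|\Delta_0|-|\Delta_1| \qquad\text{and}\qquad \sum_{\mathcal O\in\mathcal N/\mathbb Z\,\cup\,\mathcal C/\mathbb Z} q(\mathcal O) = |\Delta_1|. \]
   Context: A quiver $\Delta$ has finite vertex set $\Delta_0$, arrow set $\Delta_1$, maps $s,t$. A path of length $n\ge1$ is $(\alpha_1,\dots,\alpha_n)$ with $s\alpha_i=t\alpha_{i+1}$. A gentle quiver is $(\Delta,R)$ with $\Delta$ connected, $R$ a set of paths of length 2, such that: (1) each vertex is start of at most two arrows and end of at most two arrows; (2) for each arrow $\alpha$ at most one $\beta$ with $s\beta=t\alpha$, $(\beta,\alpha)\notin R$ and at most one $\gamma$ with $t\gamma=s\alpha$, $(\alpha,\gamma)\notin R$; (3) for each $\alpha$ at most one $\beta$ with $(\beta,\alpha)\in R$ and at most one $\gamma$ with $(\alpha,\gamma)\in R$; (4) for some $n$ every path of length $n$ has a subpath in $R$. Fix $\sigma,\tau:\Delta_1\to\{\pm1\}$ with distinct arrows of same start having opposite $\sigma$, distinct arrows of same end opposite $\tau$, and for $s\alpha=t\beta$: $(\alpha,\beta)\in R$ iff $\sigma\alpha=\tau\beta$; $\sigma\omega=\sigma\alpha_n,\tau\omega=\tau\alpha_1$. Permitted paths: paths with no consecutive pair in $R$, plus trivial $1_{x,\varepsilon}$ ($s=t=x$, $\sigma=\varepsilon,\tau=-\varepsilon$);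 maximal if no arrow $\alpha$ with $s\alpha=t\omega,\sigma\alpha=-\tau\omega$ and no $\beta$ with $t\beta=s\omega,\tau\beta=-\sigma\omega$; set $\mathcal M$. Antipaths: all consecutive pairs in $R$, plus trivial $1'_{x,\varepsilon}$ ($s=t=x$, $\sigma=\tau=\varepsilon$); maximal if no $\alpha$ with $s\alpha=t\omega,\sigma\alpha=\tau\omega$ and no $\beta$ with $t\beta=s\omega,\tau\beta=\sigma\omega$; set $\mathcal N$. $\phi:\mathcal M\to\mathcal N$, $\omega\mapsto$ unique $\omega'$ with $t\omega'=t\omega,\tau\omega'=-\tau\omega$; $\psi:\mathcal N\to\mathcal M$, $\omega\mapsto$ unique $\omega'$ with $s\omega'=s\omega,\sigma\omega'=-\sigma\omega$; $\Phi=\phi\psi$ acts on $\mathcal N$ and $\mathcal N/\mathbb Z$ is its set of orbits; for $\mathcal O\in\mathcal N/\mathbb Z$, $p(\mathcal O)=|\mathcal O|$ and $q(\mathcal O)=\sum_{\omega\in\mathcal O}\ell(\omega)$. $\mathcal C$: arrows $\alpha$ with $(\alpha)$ not a subpath of a maximal antipath; $\Psi:\mathcal C\to\mathcal C$, $\alpha\mapsto$ unique $\beta\in\mathcal C$ with $t\beta=s\alpha,\tau\beta=\sigma\alpha$; $\mathcal C/\mathbb Z$ its orbits, with $p(\mathcal O)=0$, $q(\mathcal O)=|\mathcal O|$. *)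

theory Defs
  imports Main
begin

definition is_path :: "'a set \<Rightarrow> ('a \<Rightarrow> 'v) \<Rightarrow> ('a \<Rightarrow> 'v) \<Rightarrow> 'a list \<Rightarrow> bool" where
  "is_path A s t l \<longleftrightarrow> l \<noteq> [] \<and> set l \<subseteq> A \<and>
     (\<forall>i. Suc i < length l \<longrightarrow> s (l ! i) = t (l ! Suc i))"

definition quiver_connected :: "'v set \<Rightarrow> 'a set \<Rightarrow> ('a \<Rightarrow> 'v) \<Rightarrow> ('a \<Rightarrow> 'v) \<Rightarrow> bool" where
  "quiver_connected V A s t \<longleftrightarrow>
     (let E = {(s a, t a) | a. a \<in> A} in \<forall>x\<in>V. \<forall>y\<in>V. (x, y) \<in> (E \<union> E\<inverse>)\<^sup>*)"

definition gentle :: "'v set \<Rightarrow> 'a set \<Rightarrow> ('a \<Rightarrow> 'v) \<Rightarrow> ('a \<Rightarrow> 'v) \<Rightarrow> ('a \<times> 'a) set \<Rightarrow> bool" where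
  "gentle V A s t R \<longleftrightarrow>
     finite V \<and> finite A \<and> (\<forall>a\<in>A. s a \<in> V \<and> t a \<in> V) \<and>
     quiver_connected V A s t \<and>
     R \<subseteq> {(a, b). a \<in> A \<and> b \<in> A \<and> s a = t b} \<and>
     (\<forall>x\<in>V. card {a\<in>A. s a = x} \<le> 2 \<and> card {a\<in>A. t a = x} \<le> 2) \<and>
     (\<forall>a\<in>A. card {b\<in>A. s b = t a \<and> (b, a) \<notin> R} \<le> 1 \<and>
             card {c\<in>A. t c = s a \<and> (a, c) \<notin> R} \<le> 1) \<and>
     (\<forall>a\<in>A. card {b\<in>A. (b, a) \<in> R} \<le> 1 \<and> card {c\<in>A. (a, c) \<in> R} \<le> 1) \<and>
     (\<exists>n\<ge>1. \<forall>l. is_path A s t l \<and> length l = n \<longrightarrow>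
             (\<exists>i. Suc i < n \<and> (l ! i, l ! Suc i) \<in> R))"

definition sign_fns :: "'a set \<Rightarrow> ('a \<Rightarrow> 'v) \<Rightarrow> ('a \<Rightarrow> 'v) \<Rightarrow> ('a \<times> 'a) set
    \<Rightarrow> ('a \<Rightarrow> int) \<Rightarrow> ('a \<Rightarrow> int) \<Rightarrow> bool" where
  "sign_fns A s t R \<sigma> \<tau> \<longleftrightarrow>
     (\<forall>a\<in>A. \<sigma> a \<in> {1, -1} \<and> \<tau> a \<in> {1, -1}) \<and>
     (\<forall>a\<in>A. \<forall>b\<in>A. a \<noteq> b \<and> s a = s b \<longrightarrow> \<sigma> a = - \<sigma> b) \<and>
     (\<forall>a\<in>A. \<forall>b\<in>A. a \<noteq> b \<and> t a = t b \<longrightarrow> \<tau> a = - \<tau> b) \<and>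
     (\<forall>a\<in>A. \<forall>b\<in>A. s a = t b \<longrightarrow> ((a, b) \<in> R \<longleftrightarrow> \<sigma> a = \<tau> b))"

text \<open>TrivP x e is the trivial permitted path 1_{x,e}; TrivA x e is the trivial antipath
  1'_{x,e}; Path l is the nontrivial path l = [a_1,...,a_n].\<close>

datatype ('v, 'a) qpath = TrivP 'v int | TrivA 'v int | Path "'a list"

fun psrc :: "('a \<Rightarrow> 'v) \<Rightarrow> ('v, 'a) qpath \<Rightarrow> 'v" where
  "psrc s (TrivP x e) = x"
| "psrc s (TrivA x e) = x"
| "psrc s (Path l) = s (last l)"

fun ptgt :: "('a \<Rightarrow> 'v) \<Rightarrow> ('v, 'a) qpath \<Rightarrow> 'v" where
  "ptgt t (TrivP x e) = x"
| "ptgt t (TrivA x e) = x"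
| "ptgt t (Path l) = t (hd l)"

fun psig :: "('a \<Rightarrow> int) \<Rightarrow> ('v, 'a) qpath \<Rightarrow> int" where
  "psig \<sigma> (TrivP x e) = e"
| "psig \<sigma> (TrivA x e) = e"
| "psig \<sigma> (Path l) = \<sigma> (last l)"

fun ptau :: "('a \<Rightarrow> int) \<Rightarrow> ('v, 'a) qpath \<Rightarrow> int" where
  "ptau \<tau> (TrivP x e) = - e"
| "ptau \<tau> (TrivA x e) = e"
| "ptau \<tau> (Path l) = \<tau> (hd l)"

fun plen :: "('v, 'a) qpath \<Rightarrow> nat" where
  "plen (TrivP x e) = 0"
| "plen (TrivA x e) = 0"
| "plen (Path l) = length l"

definition permitted :: "'v set \<Rightarrow> 'a set \<Rightarrow> ('a \<Rightarrow> 'v) \<Rightarrow> ('a \<Rightarrow> 'v) \<Rightarrow> ('a \<times> 'a) set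
    \<Rightarrow> ('v, 'a) qpath set" where
  "permitted V A s t R =
     {TrivP x e | x e. x \<in> V \<and> e \<in> {1, -1}} \<union>
     {Path l | l. is_path A s t l \<and> (\<forall>i. Suc i < length l \<longrightarrow> (l ! i, l ! Suc i) \<notin> R)}"

definition antipaths :: "'v set \<Rightarrow> 'a set \<Rightarrow> ('a \<Rightarrow> 'v) \<Rightarrow> ('a \<Rightarrow> 'v) \<Rightarrow> ('a \<times> 'a) set
    \<Rightarrow> ('v, 'a) qpath set" where
  "antipaths V A s t R =
     {TrivA x e | x e. x \<in> V \<and> e \<in> {1, -1}} \<union>
     {Path l | l. is_path A s t l \<and> (\<forall>i. Suc i < length l \<longrightarrow> (l ! i, l ! Suc i) \<in> R)}"

definition maxPerm where
  "maxPerm V A s t R \<sigma> \<tau> =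
     {w \<in> permitted V A s t R.
        \<not> (\<exists>a\<in>A. s a = ptgt t w \<and> \<sigma> a = - ptau \<tau> w) \<and>
        \<not> (\<exists>b\<in>A. t b = psrc s w \<and> \<tau> b = - psig \<sigma> w)}"

definition maxAnti where
  "maxAnti V A s t R \<sigma> \<tau> =
     {w \<in> antipaths V A s t R.
        \<not> (\<exists>a\<in>A. s a = ptgt t w \<and> \<sigma> a = ptau \<tau> w) \<and>
        \<not> (\<exists>b\<in>A. t b = psrc s w \<and> \<tau> b = psig \<sigma> w)}"

definition phiM where
  "phiM V A s t R \<sigma> \<tau> w =
     (THE w'. w' \<in> maxAnti V A s t R \<sigma> \<tau> \<and> ptgt t w' = ptgt t w \<and> ptau \<tau> w' = - ptau \<tau> w)"

definition psiN where
  "psiN V A s t R \<sigma> \<tau> w =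
     (THE w'. w' \<in> maxPerm V A s t R \<sigma> \<tau> \<and> psrc s w' = psrc s w \<and> psig \<sigma> w' = - psig \<sigma> w)"

definition PhiN where
  "PhiN V A s t R \<sigma> \<tau> = phiM V A s t R \<sigma> \<tau> \<circ> psiN V A s t R \<sigma> \<tau>"

definition orbits :: "('b \<Rightarrow> 'b) \<Rightarrow> 'b set \<Rightarrow> 'b set set" where
  "orbits f X = {{(f ^^ n) x | n. True} | x. x \<in> X}"

definition is_subpath :: "'a list \<Rightarrow> 'a list \<Rightarrow> bool" where
  "is_subpath p w \<longleftrightarrow> (\<exists>u v. w = u @ p @ v)"

definition arrowsC where
  "arrowsC V A s t R \<sigma> \<tau> =
     {a \<in> A. \<not> (\<exists>l. Path l \<in> maxAnti V A s t R \<sigma> \<tau> \<and> is_subpath [a] l)}"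

definition PsiC where
  "PsiC V A s t R \<sigma> \<tau> a =
     (THE b. b \<in> arrowsC V A s t R \<sigma> \<tau> \<and> t b = s a \<and> \<tau> b = \<sigma> a)"

text \<open>p and q on orbits: for O in N/Z, p O = |O|, q O = sum of lengths; for O in C/Z,
  p O = 0, q O = |O|.\<close>

end

theory Submission
  imports Defs
begin


lemma ext_back:
  assumes fin: "finite A"
    and su: "\<And>a b b'. P a b \<Longrightarrow> P a b' \<Longrightarrow> b = b'"
    and PA: "\<And>a b. P a b \<Longrightarrow> a \<in> A"
  shows "l \<noteq> [] \<Longrightarrow> distinct l \<Longrightarrow> set l \<subseteq> A \<Longrightarrow> successively P l \<Longrightarrow> \<not>(\<exists>b. P (last l) b)
    \<Longrightarrow> \<exists>l'. l' \<noteq> [] \<and> set l' \<subseteq> A \<and> successively P l' \<and> \<not>(\<exists>a. P a (hd l')) \<and> last l' = last l"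
proof (induction "card A - length l" arbitrary: l rule: less_induct)
  case less
  show ?case
  proof (cases "\<exists>a. P a (hd l)")
    case False thus ?thesis using less.prems by blast
  next
    case True
    then obtain a where a: "P a (hd l)" by blast
    have aA: "a \<in> A" using PA a by blast
    have anl: "a \<notin> set l"
    proof
      assume "a \<in> set l"
      then obtain k where k: "k < length l" "l ! k = a" by (auto simp: in_set_conv_nth)
      show False
      proof (cases "Suc k < length l")
        case True
        have "P (l!k) (l ! Suc k)" using successively_nth[OF less.prems(4) True] .
        hence "l ! Suc k = hd l" using su a k by blast
        hence "l ! Suc k = l ! 0" using less.prems(1) by (simp add: hd_conv_nth)
        thus False using less.prems(2) True nth_eq_iff_index_eq by fastforce
      next
        case False
        hence "k = length l - 1" using k by simp
        hence "a = last l" using k less.prems(1) by (simp add: last_conv_nth)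
        thus False using a less.prems(5) by blast
      qed
    qed
    have d: "distinct (a # l)" using anl less.prems(2) by simp
    have sub: "set (a#l) \<subseteq> A" using aA less.prems(3) by simp
    have "length (a#l) \<le> card A" using distinct_card[OF d] card_mono[OF fin sub] by simp
    hence lt: "card A - length (a#l) < card A - length l" by simp
    have succ: "successively P (a#l)" using a less.prems(1,4) by (simp add: successively_Cons)
    have la: "last (a#l) = last l" using less.prems(1) by simp
    have "\<exists>l'. l' \<noteq> [] \<and> set l' \<subseteq> A \<and> successively P l' \<and> \<not>(\<exists>a. P a (hd l')) \<and> last l' = last (a#l)"
      using less.hyps[OF lt] d sub succ less.prems(5) la by auto
    thus ?thesis using la by simp
  qed
qed

lemma ext_fwd:
  assumes fin: "finite A"
    and pu: "\<And>a a' b. P a b \<Longrightarrow> P a' b \<Longrightarrow> a = a'"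
    and PA: "\<And>a b. P a b \<Longrightarrow> b \<in> A"
    and "l \<noteq> []" "distinct l" "set l \<subseteq> A" "successively P l" "\<not>(\<exists>a. P a (hd l))"
  shows "\<exists>l'. l' \<noteq> [] \<and> set l' \<subseteq> A \<and> successively P l' \<and> \<not>(\<exists>b. P (last l') b) \<and> hd l' = hd l"
proof -
  have "\<exists>l'. l' \<noteq> [] \<and> set l' \<subseteq> A \<and> successively (\<lambda>x y. P y x) l' \<and> \<not>(\<exists>a. P (hd l') a) \<and> last l' = last (rev l)"
    by (rule ext_back[OF fin, where P="\<lambda>x y. P y x"]) (use assms in \<open>auto simp: last_rev\<close>)
  then obtain l' where l': "l' \<noteq> []" "set l' \<subseteq> A" "successively (\<lambda>x y. P y x) l'" "\<not>(\<exists>a. P (hd l') a)" "last l' = last (rev l)"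
    by blast
  show ?thesis
    by (rule exI[of _ "rev l'"]) (use l' assms(4) in \<open>auto simp: hd_rev last_rev\<close>)
qed

lemma uniq_back:
  assumes pu: "\<And>a a' b. P a b \<Longrightarrow> P a' b \<Longrightarrow> a = a'"
  shows "l1 \<noteq> [] \<Longrightarrow> l2 \<noteq> [] \<Longrightarrow> successively P l1 \<Longrightarrow> successively P l2 \<Longrightarrow>
    \<not>(\<exists>a. P a (hd l1)) \<Longrightarrow> \<not>(\<exists>a. P a (hd l2)) \<Longrightarrow> last l1 = last l2 \<Longrightarrow> l1 = l2"
proof (induction l1 arbitrary: l2 rule: rev_induct)
  case Nil thus ?case by simp
next
  case (snoc x xs)
  obtain ys y where l2: "l2 = ys @ [y]" using snoc.prems(2) by (metis rev_exhaust)
  have xy: "x = y" using snoc.prems(7) l2 by simp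
  show ?case
  proof (cases "xs = []")
    case True
    show ?thesis
    proof (cases "ys = []")
      case True thus ?thesis using \<open>xs=[]\<close> l2 xy by simp
    next
      case False
      have "P (last ys) y" using snoc.prems(4) l2 False by (simp add: successively_append_iff)
      thus ?thesis using snoc.prems(5) \<open>xs = []\<close> xy by auto
    qed
  next
    case False
    show ?thesis
    proof (cases "ys = []")
      case True
      have "P (last xs) x" using snoc.prems(3) False by (simp add: successively_append_iff)
      thus ?thesis using snoc.prems(6) True l2 xy by auto
    next
      case ysne: False
      have "P (last xs) x" using snoc.prems(3) False by (simp add: successively_append_iff)
      moreover have "P (last ys) x" using snoc.prems(4) l2 ysne xy by (simp add: successively_append_iff)
      ultimately have "last xs = last ys" using pu by blast
      moreover have "successively P xs" using snoc.prems(3) by (simp add: successively_append_iff)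
      moreover have "successively P ys" using snoc.prems(4) l2 by (simp add: successively_append_iff)
      moreover have "hd xs = hd (xs @ [x])" using False by simp
      moreover have "hd ys = hd l2" using l2 ysne by simp
      ultimately have "xs = ys" using snoc.IH[of ys] False ysne snoc.prems(5,6) by auto
      thus ?thesis using l2 xy by simp
    qed
  qed
qed

lemma uniq_fwd:
  assumes su: "\<And>a b b'. P a b \<Longrightarrow> P a b' \<Longrightarrow> b = b'"
    and "l1 \<noteq> []" "l2 \<noteq> []" "successively P l1" "successively P l2"
    "\<not>(\<exists>b. P (last l1) b)" "\<not>(\<exists>b. P (last l2) b)" "hd l1 = hd l2"
  shows "l1 = l2"
proof -
  have "rev l1 = rev l2"
    by (rule uniq_back[where P="\<lambda>x y. P y x"]) (use assms in \<open>auto simp: last_rev hd_rev\<close>)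
  thus ?thesis by simp
qed

lemma funpow_in: "f ` X \<subseteq> X \<Longrightarrow> x \<in> X \<Longrightarrow> (f ^^ n) x \<in> X"
  by (induction n) auto

lemma funpow_cancel:
  "f ` X \<subseteq> X \<Longrightarrow> inj_on f X \<Longrightarrow> x \<in> X \<Longrightarrow> y \<in> X \<Longrightarrow> (f^^i) x = (f^^i) y \<Longrightarrow> x = y"
proof (induction i)
  case 0 thus ?case by simp
next
  case (Suc i)
  have "(f^^i) x = (f^^i) y"
    using Suc.prems funpow_in[of f X] by (auto simp: inj_on_def)
  thus ?case using Suc by blast
qed

lemma period:
  assumes fin: "finite X" and fX: "f ` X \<subseteq> X" and inj: "inj_on f X" and x: "x \<in> X"
  shows "\<exists>k>0. (f ^^ k) x = x"
proof -
  have "\<not> inj_on (\<lambda>n. (f ^^ n) x) {0..card X}"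
  proof
    assume i: "inj_on (\<lambda>n. (f ^^ n) x) {0..card X}"
    have "(\<lambda>n. (f ^^ n) x) ` {0..card X} \<subseteq> X" using funpow_in[OF fX x] by auto
    from card_inj_on_le[OF i this fin] show False by simp
  qed
  then obtain i j where ij: "i \<noteq> j" "(f^^i) x = (f^^j) x" unfolding inj_on_def by auto
  then obtain i j where ij: "i < j" "(f^^i) x = (f^^j) x" by (metis linorder_neq_iff)
  have "(f^^j) x = (f^^i) ((f^^(j-i)) x)"
    using ij(1) by (metis funpow_add le_add_diff_inverse less_imp_le o_apply)
  hence "x = (f^^(j-i)) x"
    using funpow_cancel[OF fX inj x funpow_in[OF fX x]] ij(2) by simp
  thus ?thesis using ij(1) by (intro exI[of _ "j-i"]) auto
qed

lemma funpow_mult_fix: "(f^^k) x = x \<Longrightarrow> (f^^(k*n)) x = x"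
proof (induction n)
  case 0 thus ?case by simp
next
  case (Suc n)
  have "(f^^(k*Suc n)) x = (f^^k) ((f^^(k*n)) x)" by (simp add: funpow_add)
  thus ?case using Suc by simp
qed

lemma orbits_sum:
  assumes fin: "finite X" and fX: "f ` X \<subseteq> X" and inj: "inj_on f X"
  shows "(\<Sum>Ob\<in>orbits f X. sum h Ob) = sum h X"
proof -
  define orb where "orb x = {(f ^^ n) x | n. True}" for x
  have O: "orbits f X = orb ` X" unfolding orbits_def orb_def by auto
  have sub: "orb x \<subseteq> X" if "x \<in> X" for x using funpow_in[OF fX that] unfolding orb_def by auto
  have self: "x \<in> orb x" for x unfolding orb_def by (auto intro: exI[of _ 0])
  have U: "\<Union>(orb ` X) = X" using sub self by blast
  have tr: "orb y \<subseteq> orb x" if yx: "y \<in> orb x" for x y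
  proof
    fix z assume "z \<in> orb y"
    then obtain m where m: "z = (f^^m) y" unfolding orb_def by auto
    obtain n where n: "y = (f^^n) x" using yx unfolding orb_def by auto
    have "z = (f^^(m+n)) x" using m n by (simp add: funpow_add)
    thus "z \<in> orb x" unfolding orb_def by auto
  qed
  have sym: "x \<in> orb y" if xX: "x \<in> X" and yx: "y \<in> orb x" for x y
  proof -
    obtain n where n: "y = (f^^n) x" using yx unfolding orb_def by auto
    obtain k where k: "k > 0" "(f^^k) x = x" using period[OF fin fX inj xX] by blast
    have e: "(f^^(k*n)) x = x" using funpow_mult_fix k(2) .
    have "k*n = (k*n - n) + n" using k(1) by (simp add: add.commute le_add_diff_inverse)
    hence "(f^^(k*n)) x = (f^^(k*n - n)) y" using n by (metis funpow_add o_apply)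
    thus ?thesis using e unfolding orb_def by (metis (mono_tags, lifting) mem_Collect_eq)
  qed
  have disj: "\<forall>A\<in>orb ` X. \<forall>B\<in>orb ` X. A \<noteq> B \<longrightarrow> A \<inter> B = {}"
  proof (intro ballI impI)
    fix P Q assume P: "P \<in> orb ` X" and Q: "Q \<in> orb ` X" and ne: "P \<noteq> Q"
    obtain x where x: "x \<in> X" "P = orb x" using P by blast
    obtain y where y: "y \<in> X" "Q = orb y" using Q by blast
    show "P \<inter> Q = {}"
    proof (rule ccontr)
      assume "P \<inter> Q \<noteq> {}"
      then obtain z where z: "z \<in> orb x" "z \<in> orb y" using x y by blast
      have "orb x = orb z" using tr[OF z(1)] sym[OF x(1) z(1)] tr by blast
      moreover have "orb y = orb z" using tr[OF z(2)] sym[OF y(1) z(2)] tr by blast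
      ultimately show False using ne x y by simp
    qed
  qed
  have fin2: "\<forall>A\<in>orb ` X. finite A" using sub fin finite_subset by blast
  have "sum h (\<Union>(orb ` X)) = (\<Sum>Ob\<in>orb ` X. sum h Ob)"
    using sum.Union_disjoint[OF fin2 disj, of h] by simp
  thus ?thesis using O U by simp
qed




lemma path_conv:
  "(is_path A s t l \<and> (\<forall>i. Suc i < length l \<longrightarrow> Q (l!i) (l!Suc i))) \<longleftrightarrow>
   (l \<noteq> [] \<and> set l \<subseteq> A \<and> successively (\<lambda>a b. s a = t b \<and> Q a b) l)"
  unfolding is_path_def successively_conv_nth by auto

locale gq =
  fixes V :: "'v set" and A :: "'a set" and s t :: "'a \<Rightarrow> 'v"
    and R :: "('a \<times> 'a) set" and \<sigma> \<tau> :: "'a \<Rightarrow> int"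
  assumes G: "gentle V A s t R" and S: "sign_fns A s t R \<sigma> \<tau>"
begin

lemma finV: "finite V" and finA: "finite A" and stV: "a \<in> A \<Longrightarrow> s a \<in> V \<and> t a \<in> V"
  using G unfolding gentle_def by auto

lemma sig: "a \<in> A \<Longrightarrow> \<sigma> a \<in> {1,-1}" and tau: "a \<in> A \<Longrightarrow> \<tau> a \<in> {1,-1}"
  using S unfolding sign_fns_def by auto

lemma out_uniq: "a \<in> A \<Longrightarrow> b \<in> A \<Longrightarrow> s a = s b \<Longrightarrow> \<sigma> a = \<sigma> b \<Longrightarrow> a = b"
proof (rule ccontr)
  assume "a \<in> A" "b \<in> A" "s a = s b" "\<sigma> a = \<sigma> b" "a \<noteq> b"
  hence "\<sigma> a = - \<sigma> b" using S unfolding sign_fns_def by blast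
  thus False using \<open>\<sigma> a = \<sigma> b\<close> sig[OF \<open>a \<in> A\<close>] by auto
qed

lemma in_uniq: "a \<in> A \<Longrightarrow> b \<in> A \<Longrightarrow> t a = t b \<Longrightarrow> \<tau> a = \<tau> b \<Longrightarrow> a = b"
proof (rule ccontr)
  assume "a \<in> A" "b \<in> A" "t a = t b" "\<tau> a = \<tau> b" "a \<noteq> b"
  hence "\<tau> a = - \<tau> b" using S unfolding sign_fns_def by blast
  thus False using \<open>\<tau> a = \<tau> b\<close> tau[OF \<open>a \<in> A\<close>] by auto
qed

lemma R_iff: "a \<in> A \<Longrightarrow> b \<in> A \<Longrightarrow> s a = t b \<Longrightarrow> (a,b) \<in> R \<longleftrightarrow> \<sigma> a = \<tau> b"
  using S unfolding sign_fns_def by blast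

definition cr :: "int \<Rightarrow> 'a \<Rightarrow> 'a \<Rightarrow> bool" where
  "cr c a b \<longleftrightarrow> a \<in> A \<and> b \<in> A \<and> t b = s a \<and> \<tau> b = c * \<sigma> a"

lemma cr_su: "cr c a b \<Longrightarrow> cr c a b' \<Longrightarrow> b = b'"
  unfolding cr_def using in_uniq by metis

lemma cr_pu: "c \<in> {1,-1} \<Longrightarrow> cr c a b \<Longrightarrow> cr c a' b \<Longrightarrow> a = a'"
  unfolding cr_def using out_uniq by auto

definition maxC :: "int \<Rightarrow> ('v \<Rightarrow> int \<Rightarrow> ('v,'a) qpath) \<Rightarrow> ('v,'a) qpath set" where
  "maxC c T = {T x e | x e. x \<in> V \<and> e \<in> {1,-1} \<and> \<not>(\<exists>a\<in>A. s a = x \<and> \<sigma> a = e) \<and> \<not>(\<exists>b\<in>A. t b = x \<and> \<tau> b = c*e)}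
     \<union> {Path l | l. l \<noteq> [] \<and> set l \<subseteq> A \<and> successively (cr c) l \<and> \<not>(\<exists>a. cr c a (hd l)) \<and> \<not>(\<exists>b. cr c (last l) b)}"

lemma maxAnti_eq: "maxAnti V A s t R \<sigma> \<tau> = maxC 1 TrivA"
proof (rule set_eqI)
  fix w :: "('v,'a) qpath"
  show "w \<in> maxAnti V A s t R \<sigma> \<tau> \<longleftrightarrow> w \<in> maxC 1 TrivA"
  proof (cases w)
    case (Path l)
    have pt: "x \<in> A \<Longrightarrow> y \<in> A \<Longrightarrow> (s x = t y \<and> (x,y) \<in> R) \<longleftrightarrow> cr 1 x y" for x y
      unfolding cr_def using R_iff[of x y] by auto
    have conv: "(is_path A s t l \<and> (\<forall>i. Suc i < length l \<longrightarrow> (l!i, l!Suc i) \<in> R)) \<longleftrightarrow>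
      (l \<noteq> [] \<and> set l \<subseteq> A \<and> successively (\<lambda>a b. s a = t b \<and> (a, b) \<in> R) l)"
      using path_conv[of A s t l "\<lambda>x y. (x,y) \<in> R"] by simp
    have "(is_path A s t l \<and> (\<forall>i. Suc i < length l \<longrightarrow> (l!i, l!Suc i) \<in> R)) \<longleftrightarrow>
      (l \<noteq> [] \<and> set l \<subseteq> A \<and> successively (cr 1) l)"
      unfolding conv
    proof (rule iffI)
      assume h: "l \<noteq> [] \<and> set l \<subseteq> A \<and> successively (\<lambda>a b. s a = t b \<and> (a, b) \<in> R) l"
      show "l \<noteq> [] \<and> set l \<subseteq> A \<and> successively (cr 1) l"
        using h successively_cong[of l "\<lambda>a b. s a = t b \<and> (a, b) \<in> R" "cr 1" l] pt by blast
    next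
      assume h: "l \<noteq> [] \<and> set l \<subseteq> A \<and> successively (cr 1) l"
      show "l \<noteq> [] \<and> set l \<subseteq> A \<and> successively (\<lambda>a b. s a = t b \<and> (a, b) \<in> R) l"
        using h successively_cong[of l "\<lambda>a b. s a = t b \<and> (a, b) \<in> R" "cr 1" l] pt by blast
    qed
    note eqp = this
    have m1: "Path l \<in> maxAnti V A s t R \<sigma> \<tau> \<longleftrightarrow> (is_path A s t l \<and> (\<forall>i. Suc i < length l \<longrightarrow> (l!i, l!Suc i) \<in> R))
       \<and> \<not>(\<exists>a\<in>A. s a = t (hd l) \<and> \<sigma> a = \<tau> (hd l)) \<and> \<not>(\<exists>b\<in>A. t b = s (last l) \<and> \<tau> b = \<sigma> (last l))"
      unfolding maxAnti_def antipaths_def by auto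
    have m2: "Path l \<in> maxC 1 TrivA \<longleftrightarrow> (l \<noteq> [] \<and> set l \<subseteq> A \<and> successively (cr 1) l)
       \<and> \<not>(\<exists>a. cr 1 a (hd l)) \<and> \<not>(\<exists>b. cr 1 (last l) b)"
      unfolding maxC_def by auto
    show ?thesis
    proof (cases "l \<noteq> [] \<and> set l \<subseteq> A")
      case True
      hence hl: "hd l \<in> A" "last l \<in> A" by auto
      have h1: "(\<exists>a. cr 1 a (hd l)) \<longleftrightarrow> (\<exists>a\<in>A. s a = t (hd l) \<and> \<sigma> a = \<tau> (hd l))"
        unfolding cr_def using hl by auto
      have h2: "(\<exists>b. cr 1 (last l) b) \<longleftrightarrow> (\<exists>b\<in>A. t b = s (last l) \<and> \<tau> b = \<sigma> (last l))"
        unfolding cr_def using hl by auto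
      show ?thesis unfolding Path m1 m2 eqp h1 h2 by (rule refl)
    next
      case False
      thus ?thesis unfolding Path m1 m2 eqp by blast
    qed
  qed (auto simp: maxAnti_def antipaths_def maxC_def)
qed

lemma maxPerm_eq: "maxPerm V A s t R \<sigma> \<tau> = maxC (-1) TrivP"
proof (rule set_eqI)
  fix w :: "('v,'a) qpath"
  show "w \<in> maxPerm V A s t R \<sigma> \<tau> \<longleftrightarrow> w \<in> maxC (-1) TrivP"
  proof (cases w)
    case (Path l)
    have *: "\<sigma> a \<noteq> \<tau> b \<longleftrightarrow> \<tau> b = - \<sigma> a" if ab: "a \<in> A" "b \<in> A" for a b
    proof -
      have "\<sigma> a = 1 \<or> \<sigma> a = -1" "\<tau> b = 1 \<or> \<tau> b = -1" using sig[OF ab(1)] tau[OF ab(2)] by blast+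
      thus ?thesis by (elim disjE) simp_all
    qed
    have pt: "x \<in> A \<Longrightarrow> y \<in> A \<Longrightarrow> (s x = t y \<and> (x,y) \<notin> R) \<longleftrightarrow> cr (-1) x y" for x y
      unfolding cr_def using R_iff[of x y] *[of x y] by auto
    have conv: "(is_path A s t l \<and> (\<forall>i. Suc i < length l \<longrightarrow> (l!i, l!Suc i) \<notin> R)) \<longleftrightarrow>
      (l \<noteq> [] \<and> set l \<subseteq> A \<and> successively (\<lambda>a b. s a = t b \<and> (a, b) \<notin> R) l)"
      using path_conv[of A s t l "\<lambda>x y. (x,y) \<notin> R"] by simp
    have "(is_path A s t l \<and> (\<forall>i. Suc i < length l \<longrightarrow> (l!i, l!Suc i) \<notin> R)) \<longleftrightarrow>
      (l \<noteq> [] \<and> set l \<subseteq> A \<and> successively (cr (-1)) l)"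
      unfolding conv
    proof (rule iffI)
      assume h: "l \<noteq> [] \<and> set l \<subseteq> A \<and> successively (\<lambda>a b. s a = t b \<and> (a, b) \<notin> R) l"
      show "l \<noteq> [] \<and> set l \<subseteq> A \<and> successively (cr (-1)) l"
        using h successively_cong[of l "\<lambda>a b. s a = t b \<and> (a, b) \<notin> R" "cr (-1)" l] pt by blast
    next
      assume h: "l \<noteq> [] \<and> set l \<subseteq> A \<and> successively (cr (-1)) l"
      show "l \<noteq> [] \<and> set l \<subseteq> A \<and> successively (\<lambda>a b. s a = t b \<and> (a, b) \<notin> R) l"
        using h successively_cong[of l "\<lambda>a b. s a = t b \<and> (a, b) \<notin> R" "cr (-1)" l] pt by blast
    qed
    note eqp = this
    have m1: "Path l \<in> maxPerm V A s t R \<sigma> \<tau> \<longleftrightarrow> (is_path A s t l \<and> (\<forall>i. Suc i < length l \<longrightarrow> (l!i, l!Suc i) \<notin> R))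
       \<and> \<not>(\<exists>a\<in>A. s a = t (hd l) \<and> \<sigma> a = - \<tau> (hd l)) \<and> \<not>(\<exists>b\<in>A. t b = s (last l) \<and> \<tau> b = - \<sigma> (last l))"
      unfolding maxPerm_def permitted_def by auto
    have m2: "Path l \<in> maxC (-1) TrivP \<longleftrightarrow> (l \<noteq> [] \<and> set l \<subseteq> A \<and> successively (cr (-1)) l)
       \<and> \<not>(\<exists>a. cr (-1) a (hd l)) \<and> \<not>(\<exists>b. cr (-1) (last l) b)"
      unfolding maxC_def by auto
    show ?thesis
    proof (cases "l \<noteq> [] \<and> set l \<subseteq> A")
      case True
      hence hl: "hd l \<in> A" "last l \<in> A" by auto
      have h1: "(\<exists>a. cr (-1) a (hd l)) \<longleftrightarrow> (\<exists>a\<in>A. s a = t (hd l) \<and> \<sigma> a = - \<tau> (hd l))"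
        unfolding cr_def using hl by auto
      have h2: "(\<exists>b. cr (-1) (last l) b) \<longleftrightarrow> (\<exists>b\<in>A. t b = s (last l) \<and> \<tau> b = - \<sigma> (last l))"
        unfolding cr_def using hl by auto
      show ?thesis unfolding Path m1 m2 eqp h1 h2 by (rule refl)
    next
      case False
      thus ?thesis unfolding Path m1 m2 eqp by blast
    qed
  qed (auto simp: maxPerm_def permitted_def maxC_def)
qed

end



definition okT :: "int \<Rightarrow> ('v \<Rightarrow> int \<Rightarrow> ('v,'a) qpath) \<Rightarrow> bool" where
  "okT c T \<longleftrightarrow> (c = 1 \<and> T = TrivA) \<or> (c = -1 \<and> T = TrivP)"

lemma okT_simps:
  assumes "okT c T"
  shows "psrc s (T x e) = x" "ptgt t (T x e) = x" "psig \<sigma> (T x e) = e" "ptau \<tau> (T x e) = c * e"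
    "plen (T x e) = 0" "T x e = T x' e' \<longleftrightarrow> x = x' \<and> e = e'" "T x e \<noteq> Path l" "c \<in> {1,-1}"
  using assms unfolding okT_def by auto

context gq begin

lemma maxC_cases:
  assumes "w \<in> maxC c T"
  obtains x e where "w = T x e" "x \<in> V" "e \<in> {1,-1}" "\<not>(\<exists>a\<in>A. s a = x \<and> \<sigma> a = e)" "\<not>(\<exists>b\<in>A. t b = x \<and> \<tau> b = c*e)"
  | l where "w = Path l" "l \<noteq> []" "set l \<subseteq> A" "successively (cr c) l" "\<not>(\<exists>a. cr c a (hd l))" "\<not>(\<exists>b. cr c (last l) b)"
  using assms unfolding maxC_def by blast

lemma maxC_Path:
  assumes "okT c T" "Path l \<in> maxC c T"
  shows "l \<noteq> []" "set l \<subseteq> A" "successively (cr c) l" "\<not>(\<exists>a. cr c a (hd l))" "\<not>(\<exists>b. cr c (last l) b)"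
proof -
  have ne: "\<And>x e. Path l \<noteq> T x e" using okT_simps(7)[OF assms(1)] by metis
  show "l \<noteq> []" "set l \<subseteq> A" "successively (cr c) l" "\<not>(\<exists>a. cr c a (hd l))" "\<not>(\<exists>b. cr c (last l) b)"
    using assms(2) ne unfolding maxC_def by auto
qed

lemma U1:
  assumes cT: "okT c T" and w1: "w1 \<in> maxC c T" and w2: "w2 \<in> maxC c T"
    and eq: "psrc s w1 = psrc s w2" "psig \<sigma> w1 = psig \<sigma> w2"
  shows "w1 = w2"
proof -
  note simps = okT_simps[OF cT]
  have pu: "\<And>a a' b. cr c a b \<Longrightarrow> cr c a' b \<Longrightarrow> a = a'" using cr_pu simps(8) by blast
  show ?thesis
  proof (cases rule: maxC_cases[OF w1])
    case (1 x e)
    show ?thesis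
    proof (cases rule: maxC_cases[OF w2])
      case (1 x' e') thus ?thesis using eq \<open>w1 = T x e\<close> simps by simp
    next
      case (2 l)
      have "last l \<in> A" using 2 by auto
      thus ?thesis using eq \<open>w1 = T x e\<close> 1 2 simps by auto
    qed
  next
    case (2 l1)
    show ?thesis
    proof (cases rule: maxC_cases[OF w2])
      case (1 x e)
      have "last l1 \<in> A" using 2 by auto
      thus ?thesis using eq \<open>w2 = T x e\<close> 1 2 simps by auto
    next
      case (2 l2)
      have "last l1 = last l2"
        using out_uniq[of "last l1" "last l2"] \<open>w1 = Path l1\<close> 2 \<open>l1 \<noteq> []\<close> \<open>set l1 \<subseteq> A\<close> eq last_in_set hd_in_set by (metis psrc.simps(3) psig.simps(3) ptgt.simps(3) ptau.simps(3) subset_iff)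
      hence "l1 = l2" using uniq_back[of "cr c", OF pu] \<open>w1 = Path l1\<close> 2 by (meson \<open>l1 \<noteq> []\<close> \<open>successively (cr c) l1\<close> \<open>\<not>(\<exists>a. cr c a (hd l1))\<close>)
      thus ?thesis using \<open>w1 = Path l1\<close> 2 by simp
    qed
  qed
qed

lemma U2:
  assumes cT: "okT c T" and w1: "w1 \<in> maxC c T" and w2: "w2 \<in> maxC c T"
    and eq: "ptgt t w1 = ptgt t w2" "ptau \<tau> w1 = ptau \<tau> w2"
  shows "w1 = w2"
proof -
  note simps = okT_simps[OF cT]
  have su: "\<And>a b b'. cr c a b \<Longrightarrow> cr c a b' \<Longrightarrow> b = b'" using cr_su by blast
  show ?thesis
  proof (cases rule: maxC_cases[OF w1])
    case (1 x e)
    show ?thesis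
    proof (cases rule: maxC_cases[OF w2])
      case (1 x' e') thus ?thesis using eq \<open>w1 = T x e\<close> simps by auto
    next
      case (2 l)
      have "hd l \<in> A" using 2 by auto
      thus ?thesis using eq \<open>w1 = T x e\<close> 1 2 simps by auto
    qed
  next
    case (2 l1)
    show ?thesis
    proof (cases rule: maxC_cases[OF w2])
      case (1 x e)
      have "hd l1 \<in> A" using 2 by auto
      thus ?thesis using eq \<open>w2 = T x e\<close> 1 2 simps by auto
    next
      case (2 l2)
      have "hd l1 = hd l2"
        using in_uniq[of "hd l1" "hd l2"] \<open>w1 = Path l1\<close> 2 \<open>l1 \<noteq> []\<close> \<open>set l1 \<subseteq> A\<close> eq last_in_set hd_in_set by (metis psrc.simps(3) psig.simps(3) ptgt.simps(3) ptau.simps(3) subset_iff)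
      hence "l1 = l2" using uniq_fwd[of "cr c", OF su] \<open>w1 = Path l1\<close> 2 by (meson \<open>l1 \<noteq> []\<close> \<open>successively (cr c) l1\<close> \<open>\<not>(\<exists>b. cr c (last l1) b)\<close>)
      thus ?thesis using \<open>w1 = Path l1\<close> 2 by simp
    qed
  qed
qed

lemma E1:
  assumes cT: "okT c T" and x: "x \<in> V" and e: "e \<in> {1,-1}" and nb: "\<not>(\<exists>b\<in>A. t b = x \<and> \<tau> b = c*e)"
  shows "\<exists>w\<in>maxC c T. psrc s w = x \<and> psig \<sigma> w = e"
proof (cases "\<exists>a\<in>A. s a = x \<and> \<sigma> a = e")
  case False
  hence "T x e \<in> maxC c T" using x e nb unfolding maxC_def by blast
  thus ?thesis by (intro bexI[of _ "T x e"]) (use okT_simps[OF cT] in auto)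
next
  case True
  then obtain a where a: "a \<in> A" "s a = x" "\<sigma> a = e" by blast
  have ns: "\<not>(\<exists>b. cr c (last [a]) b)" using nb a unfolding cr_def by auto
  have "\<exists>l'. l' \<noteq> [] \<and> set l' \<subseteq> A \<and> successively (cr c) l' \<and> \<not>(\<exists>a. cr c a (hd l')) \<and> last l' = last [a]"
    by (rule ext_back[OF finA, of "cr c"]) (use cr_su a ns in \<open>auto simp: cr_def\<close>)
  then obtain l' where l': "l' \<noteq> []" "set l' \<subseteq> A" "successively (cr c) l'" "\<not>(\<exists>a. cr c a (hd l'))" "last l' = a"
    by auto
  have "Path l' \<in> maxC c T" using l' ns unfolding maxC_def by auto
  thus ?thesis using l' a by (intro bexI[of _ "Path l'"]) auto
qed

lemma E2:
  assumes cT: "okT c T" and x: "x \<in> V" and e: "e \<in> {1,-1}" and na: "\<not>(\<exists>a\<in>A. s a = x \<and> \<sigma> a = c*e)"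
  shows "\<exists>w\<in>maxC c T. ptgt t w = x \<and> ptau \<tau> w = e"
proof (cases "\<exists>b\<in>A. t b = x \<and> \<tau> b = e")
  case False
  have c: "c \<in> {1,-1}" using okT_simps[OF cT] by simp
  hence "c * (c * e) = e" by auto
  have ce: "c * e \<in> {1,-1}" using c e by auto
  have nb': "\<not>(\<exists>b\<in>A. t b = x \<and> \<tau> b = c*(c*e))" using False \<open>c * (c * e) = e\<close> by metis
  have "T x (c*e) \<in> {T x e | x e. x \<in> V \<and> e \<in> {1,-1} \<and> \<not>(\<exists>a\<in>A. s a = x \<and> \<sigma> a = e) \<and> \<not>(\<exists>b\<in>A. t b = x \<and> \<tau> b = c*e)}"
    apply (rule CollectI, rule exI[of _ x], rule exI[of _ "c*e"])
    using x ce na nb' by blast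
  hence "T x (c*e) \<in> maxC c T" unfolding maxC_def by blast
  thus ?thesis using okT_simps[OF cT] \<open>c * (c * e) = e\<close> by (intro bexI[of _ "T x (c*e)"]) auto
next
  case True
  then obtain b where b: "b \<in> A" "t b = x" "\<tau> b = e" by blast
  have c: "c \<in> {1,-1}" using okT_simps[OF cT] by simp
  have np: "\<not>(\<exists>a. cr c a (hd [b]))"
  proof
    assume "\<exists>a. cr c a (hd [b])"
    then obtain a where "a \<in> A" "s a = x" "e = c * \<sigma> a" using b unfolding cr_def by auto
    moreover hence "\<sigma> a = c * e" using c by auto
    ultimately show False using na by blast
  qed
  have "\<exists>l'. l' \<noteq> [] \<and> set l' \<subseteq> A \<and> successively (cr c) l' \<and> \<not>(\<exists>b. cr c (last l') b) \<and> hd l' = hd [b]"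
    by (rule ext_fwd[OF finA, of "cr c"]) (use cr_pu[OF c] b np in \<open>auto simp: cr_def\<close>)
  then obtain l' where l': "l' \<noteq> []" "set l' \<subseteq> A" "successively (cr c) l'" "\<not>(\<exists>b. cr c (last l') b)" "hd l' = b"
    by auto
  have "Path l' \<in> maxC c T" using l' np unfolding maxC_def by auto
  thus ?thesis using l' b by (intro bexI[of _ "Path l'"]) auto
qed

lemma maxC_props:
  assumes cT: "okT c T" and w: "w \<in> maxC c T"
  shows "psrc s w \<in> V" "psig \<sigma> w \<in> {1,-1}" "ptgt t w \<in> V" "ptau \<tau> w \<in> {1,-1}"
proof -
  note simps = okT_simps[OF cT]
  have "psrc s w \<in> V \<and> psig \<sigma> w \<in> {1,-1} \<and> ptgt t w \<in> V \<and> ptau \<tau> w \<in> {1,-1}"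
  proof (cases rule: maxC_cases[OF w])
    case (1 x e) thus ?thesis using simps by auto
  next
    case (2 l)
    hence "hd l \<in> A" "last l \<in> A" by auto
    thus ?thesis using 2 stV sig tau by auto
  qed
  thus "psrc s w \<in> V" "psig \<sigma> w \<in> {1,-1}" "ptgt t w \<in> V" "ptau \<tau> w \<in> {1,-1}" by auto
qed

lemma okA: "okT 1 TrivA" and okP: "okT (-1) TrivP" unfolding okT_def by auto

end



fun pnth :: "('v,'a) qpath \<Rightarrow> nat \<Rightarrow> 'a" where
  "pnth (Path l) i = l ! i"
| "pnth _ i = undefined"

lemma plen_pos: "i < plen w \<Longrightarrow> \<exists>l. w = Path l"
  by (cases w) auto

context gq begin

lemma psi_props:
  assumes w: "w \<in> maxAnti V A s t R \<sigma> \<tau>"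
  shows "psiN V A s t R \<sigma> \<tau> w \<in> maxPerm V A s t R \<sigma> \<tau> \<and> psrc s (psiN V A s t R \<sigma> \<tau> w) = psrc s w
     \<and> psig \<sigma> (psiN V A s t R \<sigma> \<tau> w) = - psig \<sigma> w"
proof -
  have wC: "w \<in> maxC 1 TrivA" using w maxAnti_eq by simp
  have nb: "\<not> (\<exists>b\<in>A. t b = psrc s w \<and> \<tau> b = psig \<sigma> w)" using w unfolding maxAnti_def by blast
  have x: "psrc s w \<in> V" and e: "- psig \<sigma> w \<in> {1,-1}" using maxC_props[OF okA wC] by auto
  have nb': "\<not> (\<exists>b\<in>A. t b = psrc s w \<and> \<tau> b = (-1) * (- psig \<sigma> w))" using nb by simp
  obtain w' where w': "w' \<in> maxC (-1) TrivP" "psrc s w' = psrc s w" "psig \<sigma> w' = - psig \<sigma> w"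
    using E1[OF okP x e nb'] by blast
  have ex1: "\<exists>!w'. w' \<in> maxPerm V A s t R \<sigma> \<tau> \<and> psrc s w' = psrc s w \<and> psig \<sigma> w' = - psig \<sigma> w"
  proof (rule ex1I[of _ w'])
    show "w' \<in> maxPerm V A s t R \<sigma> \<tau> \<and> psrc s w' = psrc s w \<and> psig \<sigma> w' = - psig \<sigma> w"
      using w' unfolding maxPerm_eq by blast
  next
    fix y assume y: "y \<in> maxPerm V A s t R \<sigma> \<tau> \<and> psrc s y = psrc s w \<and> psig \<sigma> y = - psig \<sigma> w"
    hence yC: "y \<in> maxC (-1) TrivP" unfolding maxPerm_eq by blast
    show "y = w'" by (rule U1[OF okP yC w'(1)]) (use y w' in simp_all)
  qed
  show ?thesis unfolding psiN_def using theI'[OF ex1] .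
qed

lemma phi_props:
  assumes m: "m \<in> maxPerm V A s t R \<sigma> \<tau>"
  shows "phiM V A s t R \<sigma> \<tau> m \<in> maxAnti V A s t R \<sigma> \<tau> \<and> ptgt t (phiM V A s t R \<sigma> \<tau> m) = ptgt t m
     \<and> ptau \<tau> (phiM V A s t R \<sigma> \<tau> m) = - ptau \<tau> m"
proof -
  have mC: "m \<in> maxC (-1) TrivP" using m maxPerm_eq by simp
  have na: "\<not> (\<exists>a\<in>A. s a = ptgt t m \<and> \<sigma> a = - ptau \<tau> m)" using m unfolding maxPerm_def by blast
  have x: "ptgt t m \<in> V" and e: "- ptau \<tau> m \<in> {1,-1}" using maxC_props[OF okP mC] by auto
  have na': "\<not> (\<exists>a\<in>A. s a = ptgt t m \<and> \<sigma> a = 1 * (- ptau \<tau> m))" using na by simp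
  obtain w' where w': "w' \<in> maxC 1 TrivA" "ptgt t w' = ptgt t m" "ptau \<tau> w' = - ptau \<tau> m"
    using E2[OF okA x e na'] by blast
  have ex1: "\<exists>!w'. w' \<in> maxAnti V A s t R \<sigma> \<tau> \<and> ptgt t w' = ptgt t m \<and> ptau \<tau> w' = - ptau \<tau> m"
  proof (rule ex1I[of _ w'])
    show "w' \<in> maxAnti V A s t R \<sigma> \<tau> \<and> ptgt t w' = ptgt t m \<and> ptau \<tau> w' = - ptau \<tau> m"
      using w' unfolding maxAnti_eq by blast
  next
    fix y assume y: "y \<in> maxAnti V A s t R \<sigma> \<tau> \<and> ptgt t y = ptgt t m \<and> ptau \<tau> y = - ptau \<tau> m"
    hence yC: "y \<in> maxC 1 TrivA" unfolding maxAnti_eq by blast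
    show "y = w'" by (rule U2[OF okA yC w'(1)]) (use y w' in simp_all)
  qed
  show ?thesis unfolding phiM_def using theI'[OF ex1] .
qed

lemma Phi_maps: "PhiN V A s t R \<sigma> \<tau> ` maxAnti V A s t R \<sigma> \<tau> \<subseteq> maxAnti V A s t R \<sigma> \<tau>"
proof
  fix x assume "x \<in> PhiN V A s t R \<sigma> \<tau> ` maxAnti V A s t R \<sigma> \<tau>"
  then obtain w where w: "w \<in> maxAnti V A s t R \<sigma> \<tau>" "x = PhiN V A s t R \<sigma> \<tau> w" by blast
  have "psiN V A s t R \<sigma> \<tau> w \<in> maxPerm V A s t R \<sigma> \<tau>" using psi_props[OF w(1)] by blast
  from phi_props[OF this] show "x \<in> maxAnti V A s t R \<sigma> \<tau>" using w(2) unfolding PhiN_def by simp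
qed

lemma Phi_inj: "inj_on (PhiN V A s t R \<sigma> \<tau>) (maxAnti V A s t R \<sigma> \<tau>)"
proof (rule inj_onI)
  fix w1 w2 assume w1: "w1 \<in> maxAnti V A s t R \<sigma> \<tau>" and w2: "w2 \<in> maxAnti V A s t R \<sigma> \<tau>"
    and eq: "PhiN V A s t R \<sigma> \<tau> w1 = PhiN V A s t R \<sigma> \<tau> w2"
  define m1 where "m1 = psiN V A s t R \<sigma> \<tau> w1"
  define m2 where "m2 = psiN V A s t R \<sigma> \<tau> w2"
  have p1: "m1 \<in> maxPerm V A s t R \<sigma> \<tau>" "psrc s m1 = psrc s w1" "psig \<sigma> m1 = - psig \<sigma> w1"
    using psi_props[OF w1] unfolding m1_def by blast+
  have p2: "m2 \<in> maxPerm V A s t R \<sigma> \<tau>" "psrc s m2 = psrc s w2" "psig \<sigma> m2 = - psig \<sigma> w2"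
    using psi_props[OF w2] unfolding m2_def by blast+
  have e: "phiM V A s t R \<sigma> \<tau> m1 = phiM V A s t R \<sigma> \<tau> m2" using eq unfolding PhiN_def m1_def m2_def by simp
  have q1: "ptgt t (phiM V A s t R \<sigma> \<tau> m1) = ptgt t m1" "ptau \<tau> (phiM V A s t R \<sigma> \<tau> m1) = - ptau \<tau> m1"
    using phi_props[OF p1(1)] by blast+
  have q2: "ptgt t (phiM V A s t R \<sigma> \<tau> m2) = ptgt t m2" "ptau \<tau> (phiM V A s t R \<sigma> \<tau> m2) = - ptau \<tau> m2"
    using phi_props[OF p2(1)] by blast+
  have m1C: "m1 \<in> maxC (-1) TrivP" and m2C: "m2 \<in> maxC (-1) TrivP" using p1(1) p2(1) unfolding maxPerm_eq by blast+
  have "m1 = m2" by (rule U2[OF okP m1C m2C]) (use q1 q2 e in simp_all)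
  hence "psrc s w1 = psrc s w2" "psig \<sigma> w1 = psig \<sigma> w2" using p1 p2 by simp_all
  moreover have "w1 \<in> maxC 1 TrivA" "w2 \<in> maxC 1 TrivA" using w1 w2 unfolding maxAnti_eq by blast+
  ultimately show "w1 = w2" using U1[OF okA] by blast
qed

lemma C_char: "arrowsC V A s t R \<sigma> \<tau> = {a\<in>A. \<not>(\<exists>l. Path l \<in> maxAnti V A s t R \<sigma> \<tau> \<and> a \<in> set l)}"
  unfolding arrowsC_def is_subpath_def by (auto simp: in_set_conv_decomp)

lemma PsiC_props:
  assumes aC: "a \<in> arrowsC V A s t R \<sigma> \<tau>"
  shows "PsiC V A s t R \<sigma> \<tau> a \<in> arrowsC V A s t R \<sigma> \<tau> \<and> cr 1 a (PsiC V A s t R \<sigma> \<tau> a)"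
proof -
  have aA: "a \<in> A" and nin: "\<not>(\<exists>l. Path l \<in> maxAnti V A s t R \<sigma> \<tau> \<and> a \<in> set l)"
    using aC C_char by auto
  have "\<exists>b. cr 1 a b"
  proof (rule ccontr)
    assume ns: "\<not>(\<exists>b. cr 1 a b)"
    have "\<exists>l'. l' \<noteq> [] \<and> set l' \<subseteq> A \<and> successively (cr 1) l' \<and> \<not>(\<exists>x. cr 1 x (hd l')) \<and> last l' = last [a]"
      apply (rule ext_back[OF finA, of "cr 1"])
      apply (erule (1) cr_su)
      using aA ns by (auto simp: cr_def)
    then obtain l' where l': "l' \<noteq> []" "set l' \<subseteq> A" "successively (cr 1) l'" "\<not>(\<exists>x. cr 1 x (hd l'))" "last l' = a"
      by auto
    have "Path l' \<in> maxC 1 TrivA" using l' ns unfolding maxC_def by auto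
    hence "Path l' \<in> maxAnti V A s t R \<sigma> \<tau>" using maxAnti_eq by simp
    moreover have "a \<in> set l'" using l' last_in_set by metis
    ultimately show False using nin by blast
  qed
  then obtain b where b: "cr 1 a b" by blast
  have bA: "b \<in> A" using b unfolding cr_def by simp
  have "\<not>(\<exists>l. Path l \<in> maxAnti V A s t R \<sigma> \<tau> \<and> b \<in> set l)"
  proof
    assume "\<exists>l. Path l \<in> maxAnti V A s t R \<sigma> \<tau> \<and> b \<in> set l"
    then obtain l where l: "Path l \<in> maxAnti V A s t R \<sigma> \<tau>" "b \<in> set l" by blast
    have lC: "Path l \<in> maxC 1 TrivA" using l maxAnti_eq by simp
    note P = maxC_Path[OF okA lC]
    obtain k where k: "k < length l" "l ! k = b" using l(2) by (auto simp: in_set_conv_nth)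
    show False
    proof (cases k)
      case 0
      hence "b = hd l" using k P(1) by (simp add: hd_conv_nth)
      thus False using b P(4) by blast
    next
      case (Suc j)
      have "cr 1 (l!j) (l!Suc j)" using successively_nth[OF P(3), of j] k Suc by simp
      hence "l!j = a" using cr_pu[of 1 "l!j" b a] b k Suc by simp
      moreover have "l!j \<in> set l" using k Suc by simp
      ultimately show False using nin l(1) by blast
    qed
  qed
  hence bC: "b \<in> arrowsC V A s t R \<sigma> \<tau>" using bA C_char by simp
  have ex1: "\<exists>!b. b \<in> arrowsC V A s t R \<sigma> \<tau> \<and> t b = s a \<and> \<tau> b = \<sigma> a"
  proof (rule ex1I[of _ b])
    show "b \<in> arrowsC V A s t R \<sigma> \<tau> \<and> t b = s a \<and> \<tau> b = \<sigma> a" using bC b unfolding cr_def by simp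
  next
    fix y assume "y \<in> arrowsC V A s t R \<sigma> \<tau> \<and> t y = s a \<and> \<tau> y = \<sigma> a"
    thus "y = b" using in_uniq[of y b] bA b C_char unfolding cr_def by auto
  qed
  have "PsiC V A s t R \<sigma> \<tau> a \<in> arrowsC V A s t R \<sigma> \<tau> \<and> t (PsiC V A s t R \<sigma> \<tau> a) = s a \<and> \<tau> (PsiC V A s t R \<sigma> \<tau> a) = \<sigma> a"
    unfolding PsiC_def using theI'[OF ex1] .
  thus ?thesis using aA C_char unfolding cr_def by auto
qed

lemma PsiC_maps: "PsiC V A s t R \<sigma> \<tau> ` arrowsC V A s t R \<sigma> \<tau> \<subseteq> arrowsC V A s t R \<sigma> \<tau>"
  using PsiC_props by auto

lemma PsiC_inj: "inj_on (PsiC V A s t R \<sigma> \<tau>) (arrowsC V A s t R \<sigma> \<tau>)"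
proof (rule inj_onI)
  fix a1 a2 assume a1: "a1 \<in> arrowsC V A s t R \<sigma> \<tau>" and a2: "a2 \<in> arrowsC V A s t R \<sigma> \<tau>"
    and eq: "PsiC V A s t R \<sigma> \<tau> a1 = PsiC V A s t R \<sigma> \<tau> a2"
  have c1: "cr 1 a1 (PsiC V A s t R \<sigma> \<tau> a1)" using PsiC_props[OF a1] by blast
  have c2: "cr 1 a2 (PsiC V A s t R \<sigma> \<tau> a1)" using PsiC_props[OF a2] eq by simp
  show "a1 = a2" using cr_pu[of 1, OF _ c1 c2] by simp
qed

lemma finC: "finite (arrowsC V A s t R \<sigma> \<tau>)"
  using finA C_char by simp

lemma count1: "finite (maxAnti V A s t R \<sigma> \<tau>) \<and> card (maxAnti V A s t R \<sigma> \<tau>) + card A = 2 * card V"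
proof -
  define N where "N = maxAnti V A s t R \<sigma> \<tau>"
  define S where "S = V \<times> {1::int, -1}"
  define f1 where "f1 = (\<lambda>w. (psrc s w, psig \<sigma> w))"
  define f2 where "f2 = (\<lambda>b. (t b, \<tau> b))"
  have NC: "N = maxC 1 TrivA" using maxAnti_eq N_def by simp
  have i1: "inj_on f1 N" unfolding f1_def NC by (rule inj_onI) (use U1[OF okA] in auto)
  have i2: "inj_on f2 A" unfolding f2_def by (rule inj_onI) (use in_uniq in auto)
  have s1: "f1 ` N \<subseteq> S" unfolding f1_def S_def NC using maxC_props[OF okA] by auto
  have s2: "f2 ` A \<subseteq> S" unfolding f2_def S_def using stV tau by auto
  have d: "f1 ` N \<inter> f2 ` A = {}" unfolding f1_def f2_def N_def maxAnti_def by auto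
  have cov: "S \<subseteq> f1 ` N \<union> f2 ` A"
  proof
    fix p assume "p \<in> S"
    then obtain x e where p: "p = (x,e)" "x \<in> V" "e \<in> {1::int,-1}" unfolding S_def by auto
    show "p \<in> f1 ` N \<union> f2 ` A"
    proof (cases "\<exists>b\<in>A. t b = x \<and> \<tau> b = e")
      case True thus ?thesis unfolding f2_def p by auto
    next
      case False
      have "\<exists>w\<in>maxC 1 TrivA. psrc s w = x \<and> psig \<sigma> w = e"
        by (rule E1[OF okA p(2,3)]) (use False in auto)
      thus ?thesis unfolding f1_def NC p by auto
    qed
  qed
  have SU: "S = f1 ` N \<union> f2 ` A" using s1 s2 cov by blast
  have fS: "finite S" unfolding S_def using finV by simp
  have fN: "finite N" using finite_imageD[OF finite_subset[OF s1 fS] i1] .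
  have "card S = card V * 2" unfolding S_def by (simp add: card_cartesian_product)
  moreover have "card S = card N + card A"
    using SU card_Un_disjoint[of "f1 ` N" "f2 ` A"] d fN finA card_image[OF i1] card_image[OF i2] by simp
  ultimately show ?thesis using fN N_def by simp
qed

lemma chain_pos:
  assumes l1: "Path l1 \<in> maxC 1 TrivA" and l2: "Path l2 \<in> maxC 1 TrivA"
    and i: "i < length l1" and j: "j < length l2" and eq: "l1 ! i = l2 ! j"
  shows "i = j \<and> l1 = l2"
proof -
  note P1 = maxC_Path[OF okA l1] and P2 = maxC_Path[OF okA l2]
  have pu: "\<And>a a' b. cr 1 a b \<Longrightarrow> cr 1 a' b \<Longrightarrow> a = a'" using cr_pu by auto
  have su: "\<And>a b b'. cr 1 a b \<Longrightarrow> cr 1 a b' \<Longrightarrow> b = b'" using cr_su by blast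
  have sp: "\<And>l n. successively (cr 1) l \<Longrightarrow> successively (cr 1) (take n l) \<and> successively (cr 1) (drop n l)"
    by (metis append_take_drop_id successively_append_iff)
  have lt1: "last (take (Suc i) l1) = l1 ! i" using i by (simp add: take_Suc_conv_app_nth)
  have lt2: "last (take (Suc j) l2) = l2 ! j" using j by (simp add: take_Suc_conv_app_nth)
  have tk: "take (Suc i) l1 = take (Suc j) l2"
    apply (rule uniq_back[of "cr 1", OF pu])
    using P1 P2 sp lt1 lt2 eq by auto
  hence ij: "i = j" using i j by (metis length_take min.absorb4 Suc_leI Suc_inject le_eq_less_or_eq min_def)
  have dr: "drop i l1 = drop j l2"
    apply (rule uniq_fwd[of "cr 1", OF su])
    using P1 P2 sp i j eq by (auto simp: hd_drop_conv_nth)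
  have "take i l1 = take i l2" using tk ij by (metis lessI min.strict_order_iff take_take)
  hence "l1 = l2" using dr ij by (metis append_take_drop_id)
  thus ?thesis using ij by simp
qed

lemma count2: "(\<Sum>w\<in>maxAnti V A s t R \<sigma> \<tau>. plen w) + card (arrowsC V A s t R \<sigma> \<tau>) = card A"
proof -
  define N where "N = maxAnti V A s t R \<sigma> \<tau>"
  define C where "C = arrowsC V A s t R \<sigma> \<tau>"
  define Sg where "Sg = Sigma N (\<lambda>w. {..<plen w})"
  define g where "g = (\<lambda>p::('v,'a) qpath \<times> nat. pnth (fst p) (snd p))"
  have NC: "N = maxC 1 TrivA" using maxAnti_eq N_def by simp
  have fN: "finite N" using count1 N_def by simp
  have cS: "card Sg = (\<Sum>w\<in>N. plen w)" unfolding Sg_def using fN by simp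
  have ig: "inj_on g Sg"
  proof (rule inj_onI)
    fix p q assume p: "p \<in> Sg" and q: "q \<in> Sg" and e: "g p = g q"
    obtain w1 i where pw: "p = (w1, i)" "w1 \<in> N" "i < plen w1" using p unfolding Sg_def by auto
    obtain w2 j where qw: "q = (w2, j)" "w2 \<in> N" "j < plen w2" using q unfolding Sg_def by auto
    obtain l1 where l1: "w1 = Path l1" using plen_pos pw by blast
    obtain l2 where l2: "w2 = Path l2" using plen_pos qw by blast
    have "i = j \<and> l1 = l2"
      by (rule chain_pos) (use pw qw l1 l2 e NC in \<open>auto simp: g_def\<close>)
    thus "p = q" using pw qw l1 l2 by simp
  qed
  have im: "g ` Sg = A - C"
  proof
    show "g ` Sg \<subseteq> A - C"
    proof
      fix a assume "a \<in> g ` Sg"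
      then obtain w i where w: "w \<in> N" "i < plen w" "a = g (w,i)" unfolding Sg_def by auto
      obtain l where l: "w = Path l" using plen_pos w by blast
      have "a \<in> set l" using w l by (simp add: g_def)
      moreover have "set l \<subseteq> A" using maxC_Path(2)[OF okA] w l NC by simp
      ultimately show "a \<in> A - C" using w l C_char unfolding N_def C_def by auto
    qed
  next
    show "A - C \<subseteq> g ` Sg"
    proof
      fix a assume "a \<in> A - C"
      then obtain l where l: "Path l \<in> N" "a \<in> set l" using C_char unfolding N_def C_def by auto
      then obtain i where i: "i < length l" "l ! i = a" by (auto simp: in_set_conv_nth)
      have "(Path l, i) \<in> Sg" using l i unfolding Sg_def by simp
      moreover have "g (Path l, i) = a" using i by (simp add: g_def)
      ultimately show "a \<in> g ` Sg" by force
    qed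
  qed
  have "card (A - C) = card Sg" using card_image[OF ig] im by simp
  moreover have "C \<subseteq> A" unfolding C_def using C_char by auto
  ultimately have "card Sg + card C = card A"
    using card_Diff_subset[of C A] finA finite_subset[of C A] card_mono[of A C] by simp
  thus ?thesis using cS N_def C_def by simp
qed

end

theorem lemma3p2:
  fixes V :: "'v set" and A :: "'a set" and s t :: "'a \<Rightarrow> 'v"
    and R :: "('a \<times> 'a) set" and \<sigma> \<tau> :: "'a \<Rightarrow> int"
  assumes "gentle V A s t R" and "sign_fns A s t R \<sigma> \<tau>"
  shows "((\<Sum>Ob\<in>orbits (PhiN V A s t R \<sigma> \<tau>) (maxAnti V A s t R \<sigma> \<tau>). int (card Ob))
           + (\<Sum>Ob\<in>orbits (PsiC V A s t R \<sigma> \<tau>) (arrowsC V A s t R \<sigma> \<tau>). (0::int))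
         = 2 * int (card V) - int (card A)) \<and>
         ((\<Sum>Ob\<in>orbits (PhiN V A s t R \<sigma> \<tau>) (maxAnti V A s t R \<sigma> \<tau>). (\<Sum>w\<in>Ob. plen w))
           + (\<Sum>Ob\<in>orbits (PsiC V A s t R \<sigma> \<tau>) (arrowsC V A s t R \<sigma> \<tau>). card Ob)
         = card A)"
proof -
  interpret gq V A s t R \<sigma> \<tau> using assms by unfold_locales
  define N where "N = maxAnti V A s t R \<sigma> \<tau>"
  define C where "C = arrowsC V A s t R \<sigma> \<tau>"
  define F where "F = PhiN V A s t R \<sigma> \<tau>"
  define G where "G = PsiC V A s t R \<sigma> \<tau>"
  have fN: "finite N" and c1: "card N + card A = 2 * card V" using count1 N_def by auto
  have fC: "finite C" using finC C_def by simp
  have o1: "(\<Sum>Ob\<in>orbits F N. sum h Ob) = sum h N" for h :: "_ \<Rightarrow> nat"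
    using orbits_sum[OF fN] Phi_maps Phi_inj F_def N_def by blast
  have o2: "(\<Sum>Ob\<in>orbits G C. sum h Ob) = sum h C" for h :: "_ \<Rightarrow> nat"
    using orbits_sum[OF fC] PsiC_maps PsiC_inj G_def C_def by blast
  have "(\<Sum>Ob\<in>orbits F N. int (card Ob)) = int (\<Sum>Ob\<in>orbits F N. card Ob)" by simp
  also have "(\<Sum>Ob\<in>orbits F N. card Ob) = (\<Sum>Ob\<in>orbits F N. sum (\<lambda>_. 1) Ob)" by simp
  also have "\<dots> = card N" using o1[of "\<lambda>_. 1"] by simp
  finally have e1: "(\<Sum>Ob\<in>orbits F N. int (card Ob)) = 2 * int (card V) - int (card A)" using c1 by linarith
  have "(\<Sum>Ob\<in>orbits G C. card Ob) = (\<Sum>Ob\<in>orbits G C. sum (\<lambda>_. 1) Ob)" by simp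
  also have "\<dots> = card C" using o2[of "\<lambda>_. 1"] by simp
  finally have e2: "(\<Sum>Ob\<in>orbits G C. card Ob) = card C" .
  have e3: "(\<Sum>Ob\<in>orbits F N. (\<Sum>w\<in>Ob. plen w)) = (\<Sum>w\<in>N. plen w)" using o1 by blast
  show ?thesis using e1 e2 e3 count2 unfolding N_def C_def F_def G_def by simp
qed


end
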